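(* Let $k=n/m$ with $n,m$ coprime positive integers, let $q_c$ be an exponential factor all of whose exponents are $>k$, let $r=\mathrm{ram}(q_c)$, let $a,\hat a\in\mathbb C$, and let $b,\hat b$ be exponential factors of slope $<k$. Put $q=q_c+ax^k+b$ and $\hat q=q_c+\hat ax^k+\hat b$. Then $\langle q\rangle\neq\langle\hat q\rangle$ and $f_{q,\hat q}=k$ if and only if one of the following holds: (1) $m$ divides $r$ and $a\neq\hat a$; (2) $m$ does not divide $r$ and either (2a) exactly one of $a,\hat a$ is zero, or (2b) $a\ne0$, $\hat a\ne0$ and $a^N\neq\hat a^N$, where $N=\mathrm{lcm}(r,m)/r$. (Equivalently, in case (2), $a^N\ne\hat a^N$.)
   Context: Exponential factors: finite sums $q=\sum_ka_kx^k$, $a_k\in\mathbb C$, $k\in\mathbb Q_{>0}$; $E(q)$ = set of exponents with $a_k\ne0$; $\mathrm{slope}(q)=\max E(q)$ ($0$ if $q=0$); $\mathrm{ram}(q)$ = least $r\ge1$ with $q\in x^{1/r}\mathbb C[x^{1/r}]$. Galois operator $\sigma(\sum a_kx^k)=\sum a_ke^{-2\pi\sqrt{-1}k}x^k$; Stokes circle $\langle q\rangle=\{\sigma^i(q):i\in\mathbb Z\}$. Truncation $\tau_k(\sum a_{k'}x^{k'})=\sum_{k'\ge k}a_{k'}x^{k'}$. Common part/fission exponent: for $q,\hat q$ in distinct orbits, if some $k'\in E(q)$ has $\langle\tau_{k'}(q)\rangle=\langle\tau_{k'}(\hat q)\rangle$, let $k'$ be the smallest, and put $q_c'=\tau_{k'}(q)$,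 $\hat q_c'=\tau_{k'}(\hat q)$; else $q_c'=\hat q_c'=0$. The fission exponent is $f_{q,\hat q}=\max(\mathrm{slope}(q-q_c'),\mathrm{slope}(\hat q-\hat q_c'))$. *)

theory Defs
  imports Complex_Main
begin

text \<open>An exponential factor \<open>\<Sum>\<^sub>k a\<^sub>k x\<^sup>k\<close> is represented by its coefficient
  function \<open>rat \<Rightarrow> complex\<close> (k \<mapsto> a_k), with finite support contained in the positive rationals.\<close>

type_synonym expfactor = "rat \<Rightarrow> complex"

definition is_expfactor :: "expfactor \<Rightarrow> bool" where
  "is_expfactor q \<longleftrightarrow> finite {k. q k \<noteq> 0} \<and> (\<forall>k. q k \<noteq> 0 \<longrightarrow> k > 0)"

definition E :: "expfactor \<Rightarrow> rat set" where
  "E q = {k. q k \<noteq> 0}"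

definition slope :: "expfactor \<Rightarrow> rat" where
  "slope q = (if E q = {} then 0 else Max (E q))"

definition ram :: "expfactor \<Rightarrow> nat" where
  "ram q = (LEAST r::nat. r \<ge> 1 \<and> (\<forall>k\<in>E q. \<exists>j::int. k * of_nat r = of_int j))"

definition sigma :: "expfactor \<Rightarrow> expfactor" where
  "sigma q = (\<lambda>k. exp (- 2 * of_real pi * \<i> * of_real (of_rat k)) * q k)"

definition sigma_inv :: "expfactor \<Rightarrow> expfactor" where
  "sigma_inv q = (\<lambda>k. exp (2 * of_real pi * \<i> * of_real (of_rat k)) * q k)"

definition sigma_pow :: "int \<Rightarrow> expfactor \<Rightarrow> expfactor" where
  "sigma_pow i = (if i \<ge> 0 then sigma ^^ nat i else sigma_inv ^^ nat (- i))"

definition stokes_circle :: "expfactor \<Rightarrow> expfactor set" where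
  "stokes_circle q = {sigma_pow i q | i. True}"

definition tau :: "rat \<Rightarrow> expfactor \<Rightarrow> expfactor" where
  "tau k q = (\<lambda>k'. if k' \<ge> k then q k' else 0)"

definition common_set :: "expfactor \<Rightarrow> expfactor \<Rightarrow> rat set" where
  "common_set q qh = {k'\<in>E q. stokes_circle (tau k' q) = stokes_circle (tau k' qh)}"

definition fission_exp :: "expfactor \<Rightarrow> expfactor \<Rightarrow> rat" where
  "fission_exp q qh =
     (let qc' = (if common_set q qh = {} then (\<lambda>_. 0) else tau (Min (common_set q qh)) q);
          qhc' = (if common_set q qh = {} then (\<lambda>_. 0) else tau (Min (common_set q qh)) qh)
      in max (slope (\<lambda>x. q x - qc' x)) (slope (\<lambda>x. qh x - qhc' x)))"

end

theory Submission
  imports Defs "HOL-Analysis.Complex_Transcendental"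
begin

definition W :: "int \<Rightarrow> rat \<Rightarrow> complex" where
  "W i e = exp (- 2 * of_real pi * \<i> * of_real (of_rat e) * of_int i)"

lemma sigma_iter: "(sigma ^^ n) q = (\<lambda>e. exp (- 2 * of_real pi * \<i> * of_real (of_rat e)) ^ n * q e)"
  by (induction n) (auto simp: sigma_def fun_eq_iff)

lemma sigma_inv_iter: "(sigma_inv ^^ n) q = (\<lambda>e. exp (2 * of_real pi * \<i> * of_real (of_rat e)) ^ n * q e)"
  by (induction n) (auto simp: sigma_inv_def fun_eq_iff)

lemma sigma_pow_eq: "sigma_pow i q = (\<lambda>e. W i e * q e)"
proof (cases "i \<ge> 0")
  case True
  then show ?thesis
    by (auto simp: sigma_pow_def sigma_iter W_def fun_eq_iff exp_of_nat_mult[symmetric] mult.commute)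
next
  case False
  have "exp (2 * of_real pi * \<i> * of_real (of_rat e)) ^ nat (-i) = W i e" for e
    using False by (simp add: W_def exp_of_nat_mult[symmetric] algebra_simps)
  then show ?thesis using False
    by (auto simp: sigma_pow_def sigma_inv_iter fun_eq_iff)
qed

lemma W_add: "W (i + j) e = W i e * W j e"
  by (simp add: W_def exp_add[symmetric] algebra_simps)

lemma W_nz: "W i e \<noteq> 0" by (simp add: W_def)

lemma W_0: "W 0 e = 1" by (simp add: W_def)

lemma circ_eq: "stokes_circle x = stokes_circle y \<longleftrightarrow> (\<exists>i. x = sigma_pow i y)"
proof
  assume "stokes_circle x = stokes_circle y"
  moreover have "x \<in> stokes_circle x"
  proof -
    have "x = sigma_pow 0 x" by (simp add: sigma_pow_eq W_0)
    then show ?thesis unfolding stokes_circle_def by blast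
  qed
  ultimately show "\<exists>i. x = sigma_pow i y" by (auto simp: stokes_circle_def)
next
  assume "\<exists>i. x = sigma_pow i y"
  then obtain i where i: "x = (\<lambda>e. W i e * y e)" by (auto simp: sigma_pow_eq)
  have "sigma_pow j x = sigma_pow (j + i) y" for j
    by (simp add: i sigma_pow_eq W_add fun_eq_iff)
  moreover have "sigma_pow j y = sigma_pow (j - i) x" for j
    by (simp add: i sigma_pow_eq W_add[symmetric] fun_eq_iff)
  ultimately show "stokes_circle x = stokes_circle y"
    unfolding stokes_circle_def by (metis (no_types, lifting))
qed

lemma W_eq_1: "W i e = 1 \<longleftrightarrow> (\<exists>j::int. e * of_int i = of_int j)"
proof -
  define x where "x = (of_rat (e * of_int i) :: real)"
  define z where "z = complex_of_real (- 2 * pi * x) * \<i>"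
  have Wz: "W i e = exp z"
    unfolding W_def z_def x_def by (simp add: of_rat_mult mult.commute mult.left_commute)
  have Re: "Re z = 0" and Im: "Im z = - 2 * pi * x" unfolding z_def by simp_all
  have step: "(- 2 * pi * x = of_int (2 * n) * pi) \<longleftrightarrow> x = of_int (- n)" for n :: int
  proof
    assume "- 2 * pi * x = of_int (2 * n) * pi"
    then have "pi * (2 * x + 2 * of_int n) = 0" by (simp add: algebra_simps)
    then show "x = of_int (- n)" by simp
  next
    assume "x = of_int (- n)"
    then show "- 2 * pi * x = of_int (2 * n) * pi" by simp
  qed
  have "W i e = 1 \<longleftrightarrow> (\<exists>n::int. - 2 * pi * x = of_int (2 * n) * pi)"
    using Wz exp_eq_1[of z] Re Im by simp
  also have "\<dots> \<longleftrightarrow> (\<exists>n::int. x = of_int (- n))" using step by blast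
  also have "\<dots> \<longleftrightarrow> (\<exists>n::int. e * of_int i = of_int (- n))"
    unfolding x_def by (metis of_rat_eq_iff of_rat_of_int_eq)
  also have "\<dots> \<longleftrightarrow> (\<exists>j::int. e * of_int i = of_int j)"
    by (metis minus_minus)
  finally show ?thesis .
qed

lemma tau_sigma: "tau c (sigma_pow i y) = sigma_pow i (tau c y)"
  by (simp add: tau_def sigma_pow_eq fun_eq_iff)

lemma tau_tau: "c \<le> c' \<Longrightarrow> tau c' (tau c y) = tau c' y"
  by (auto simp: tau_def fun_eq_iff)

lemma circ_tau_mono: "stokes_circle (tau c x) = stokes_circle (tau c y) \<Longrightarrow> c \<le> c'
   \<Longrightarrow> stokes_circle (tau c' x) = stokes_circle (tau c' y)"
proof -
  assume "stokes_circle (tau c x) = stokes_circle (tau c y)" "c \<le> c'"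
  then obtain i where "tau c x = sigma_pow i (tau c y)" using circ_eq by blast
  then have "tau c' (tau c x) = tau c' (sigma_pow i (tau c y))" by simp
  then have "tau c' x = sigma_pow i (tau c' y)" using tau_tau[OF \<open>c \<le> c'\<close>] tau_sigma by metis
  then show ?thesis using circ_eq by blast
qed

lemma circ_full_tau: "stokes_circle x = stokes_circle y \<Longrightarrow> stokes_circle (tau c x) = stokes_circle (tau c y)"
proof -
  assume "stokes_circle x = stokes_circle y"
  then obtain i where "x = sigma_pow i y" using circ_eq by blast
  then have "tau c x = sigma_pow i (tau c y)" using tau_sigma by simp
  then show ?thesis using circ_eq by blast
qed

lemma finite_int_denom:
  assumes "finite (A :: rat set)"
  shows "\<exists>r::nat. r \<ge> 1 \<and> (\<forall>k\<in>A. \<exists>j::int. k * of_nat r = of_int j)"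
  using assms
proof (induction A rule: finite_induct)
  case empty
  then show ?case by auto
next
  case (insert x A)
  then obtain r :: nat where r: "r \<ge> 1" "\<forall>k\<in>A. \<exists>j::int. k * of_nat r = of_int j" by auto
  obtain p q where pq: "quotient_of x = (p, q)" by (cases "quotient_of x")
  have q: "q > 0" using quotient_of_denom_pos[OF pq] .
  have xq: "x = of_int p / of_int q" using quotient_of_div[OF pq] .
  define r' where "r' = r * nat q"
  have "r' \<ge> 1" using r q by (simp add: r'_def)
  moreover have "\<exists>j::int. k * of_nat r' = of_int j" if "k \<in> insert x A" for k
  proof (cases "k = x")
    case True
    have "k * of_nat r' = of_int (p * int r)" using q
      by (simp add: True xq r'_def of_nat_mult)
    then show ?thesis by blast
  next
    case False
    then have "k \<in> A" using that by auto
    then obtain j where "k * of_nat r = of_int j" using r by auto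
    then have "k * of_nat r' = of_int (j * q)" using q
      by (simp add: r'_def of_nat_mult mult.assoc[symmetric])
    then show ?thesis by blast
  qed
  ultimately show ?case by blast
qed

lemma ram_props:
  assumes "finite (E q)"
  shows "ram q \<ge> 1" "\<forall>k\<in>E q. \<exists>j::int. k * of_nat (ram q) = of_int j"
proof -
  obtain r :: nat where "r \<ge> 1 \<and> (\<forall>k\<in>E q. \<exists>j::int. k * of_nat r = of_int j)"
    using finite_int_denom[OF assms] by blast
  then have "ram q \<ge> 1 \<and> (\<forall>k\<in>E q. \<exists>j::int. k * of_nat (ram q) = of_int j)"
    unfolding ram_def by (rule LeastI)
  then show "ram q \<ge> 1" "\<forall>k\<in>E q. \<exists>j::int. k * of_nat (ram q) = of_int j" by auto
qed

lemma ram_dvd_iff: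
  assumes "finite (E q)"
  shows "(\<forall>k\<in>E q. \<exists>j::int. k * of_int i = of_int j) \<longleftrightarrow> int (ram q) dvd i"
proof
  assume "int (ram q) dvd i"
  then obtain t where t: "i = int (ram q) * t" by (auto simp: dvd_def)
  show "\<forall>k\<in>E q. \<exists>j::int. k * of_int i = of_int j"
  proof
    fix k assume "k \<in> E q"
    then obtain j where "k * of_nat (ram q) = of_int j" using ram_props[OF assms] by auto
    then have "k * of_int i = of_int (j * t)" by (simp add: t mult.assoc[symmetric])
    then show "\<exists>j::int. k * of_int i = of_int j" by blast
  qed
next
  assume H: "\<forall>k\<in>E q. \<exists>j::int. k * of_int i = of_int j"
  define r where "r = ram q"
  have r1: "r \<ge> 1" using ram_props[OF assms] by (simp add: r_def)
  define i' where "i' = i mod int r"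
  have i'r: "i' \<ge> 0" "i' < int r" using r1 by (auto simp: i'_def)
  have i'eq: "i' = i - int r * (i div int r)" by (simp add: i'_def mod_div_mult_eq algebra_simps)
  have P: "\<exists>j::int. k * of_nat (nat i') = of_int j" if kE: "k \<in> E q" for k
  proof -
    obtain j1 where j1: "k * of_int i = of_int j1" using H kE by auto
    obtain j2 where j2: "k * of_nat r = of_int j2" using ram_props[OF assms] kE by (auto simp: r_def)
    have "k * of_nat (nat i') = k * of_int i'" using i'r by simp
    also have "\<dots> = k * of_int i - (k * of_nat r) * of_int (i div int r)"
      by (simp add: i'eq algebra_simps)
    also have "\<dots> = of_int (j1 - j2 * (i div int r))" by (simp add: j1 j2)
    finally show ?thesis by blast
  qed
  have "i' = 0"
  proof (rule ccontr)
    assume "i' \<noteq> 0"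
    then have "nat i' \<ge> 1" using i'r by auto
    then have "ram q \<le> nat i'" unfolding ram_def using P by (intro Least_le) auto
    then show False using i'r by (simp add: r_def)
  qed
  then show "int (ram q) dvd i" by (simp add: i'_def r_def dvd_eq_mod_eq_0)
qed

lemma W_pow: "W i e ^ N = W (int N * i) e"
  by (induction N) (simp_all add: W_0 W_add[symmetric] algebra_simps)

lemma root_N:
  fixes n m r :: nat and a ah :: complex
  assumes m: "m > 0" and r: "r \<ge> 1" and cop: "coprime n m" and ah: "ah \<noteq> 0"
  defines "N \<equiv> lcm r m div r"
  shows "(\<exists>j::int. a = W (int r * j) (of_nat n / of_nat m) * ah) \<longleftrightarrow> a ^ N = ah ^ N"
proof -
  define g where "g = gcd r m"
  have rN: "r * N = lcm r m" unfolding N_def by simp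
  have Ng: "N * g = m"
  proof -
    have "r * (N * g) = lcm r m * gcd r m" by (simp add: rN[symmetric] g_def mult.assoc)
    also have "\<dots> = r * m" using prod_gcd_lcm_nat[of r m] by (simp add: mult.commute)
    finally have "r * (N * g) = r * m" .
    then show ?thesis using r by simp
  qed
  have N1: "N \<ge> 1" using Ng m by (cases N) auto
  show ?thesis
  proof
    assume "\<exists>j::int. a = W (int r * j) (of_nat n / of_nat m) * ah"
    then obtain j where j: "a = W (int r * j) (of_nat n / of_nat m) * ah" by blast
    obtain c where c: "lcm r m = m * c" by (meson dvd_def dvd_lcm2)
    have "(of_nat n / of_nat m) * (of_int (int N * (int r * j)) :: rat) = of_int (int n * int c * j)"
    proof -
      have "int N * (int r * j) = int m * int c * j" using rN c
        by (metis mult.assoc mult.commute of_nat_mult)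
      then show ?thesis using m by (simp add: field_simps) (metis of_int_mult of_int_of_nat_eq)
    qed
    then have "W (int N * (int r * j)) (of_nat n / of_nat m) = 1" using W_eq_1 by blast
    then show "a ^ N = ah ^ N" by (simp add: j power_mult_distrib W_pow)
  next
    assume H: "a ^ N = ah ^ N"
    define \<omega> where "\<omega> = a / ah"
    have "\<omega> ^ N = 1" using H ah by (simp add: \<omega>_def power_divide)
    then obtain t :: nat where t: "\<omega> = exp (2 * of_real pi * \<i> * of_nat t / of_nat N)"
      using complex_roots_unity[OF N1] by auto
    have cop': "coprime (int m) (int n)" using cop by (simp add: coprime_commute)
    have "gcd (int r * int n) (int m) = int g"
      using gcd_mult_left_right_cancel[OF cop', of "int r"] by (simp add: g_def gcd_int_int_eq)
    then obtain u v where uv: "u * (int r * int n) + v * int m = int g" using bezout_int by metis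
    define j where "j = - int t * u"
    have "W (int r * j) (of_nat n / of_nat m) = \<omega>"
    proof -
      have uvc: "of_int u * (of_nat r * of_nat n) + of_int v * of_nat m = (of_nat g :: complex)"
        using arg_cong[OF uv, of "of_int :: int \<Rightarrow> complex"] by simp
      have Ngc: "of_nat N * of_nat g = (of_nat m :: complex)"
        using arg_cong[OF Ng, of "of_nat :: nat \<Rightarrow> complex"] by simp
      have mz: "(of_nat m :: complex) \<noteq> 0" using m by simp
      have Nz: "(of_nat N :: complex) \<noteq> 0" using N1 by simp
      have "- 2 * of_real pi * \<i> * of_real (of_rat (of_nat n / of_nat m)) * of_int (int r * j)
         = 2 * of_real pi * \<i> * of_nat t / of_nat N + (of_int (2 * (- int t * v)) * pi) * \<i>"
      proof -
        have e1: "(of_real (of_rat (of_nat n / of_nat m)) :: complex) = of_nat n / of_nat m"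
          by (simp add: of_rat_divide)
        have "of_nat t / of_nat N = (of_nat t * of_nat g / of_nat m :: complex)"
          using Ngc mz Nz by (simp add: field_simps)
        note tN = this
        define P :: complex where "P = 2 * of_real pi * \<i>"
        define M :: complex where "M = of_nat m"
        have L: "- 2 * of_real pi * \<i> * (of_nat n / of_nat m) * of_int (int r * j)
             = P * (of_nat t * (of_int u * (of_nat r * of_nat n))) / M"
          unfolding P_def M_def j_def by (simp add: algebra_simps)
        have R: "2 * of_real pi * \<i> * of_nat t / of_nat N + (of_int (2 * (- int t * v)) * pi) * \<i>
             = P * (of_nat t * of_nat g) / M - P * (of_nat t * (of_int v * M)) / M"
        proof -
          have R1: "2 * of_real pi * \<i> * of_nat t / of_nat N = P * (of_nat t * of_nat g) / M"
          proof -
            have "2 * of_real pi * \<i> * of_nat t / of_nat N = P * (of_nat t / of_nat N)"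
              unfolding P_def by simp
            also have "\<dots> = P * (of_nat t * of_nat g / of_nat m)" using tN by simp
            finally show ?thesis by (simp add: M_def)
          qed
          have R2: "(of_int (2 * (- int t * v)) * pi) * \<i> = - (P * (of_nat t * (of_int v * M)) / M)"
            using mz unfolding P_def M_def by (simp add: field_simps)
          show ?thesis using R1 R2 by simp
        qed
        have D: "of_nat t * of_nat g - of_nat t * (of_int v * M) = of_nat t * (of_int u * (of_nat r * of_nat n :: complex))"
          unfolding M_def uvc[symmetric] by (simp add: algebra_simps)
        have "P * (of_nat t * of_nat g) / M - P * (of_nat t * (of_int v * M)) / M
             = P * (of_nat t * of_nat g - of_nat t * (of_int v * M)) / M"
          by (simp add: diff_divide_distrib right_diff_distrib)
        then show ?thesis unfolding e1 using L R D by simp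
      qed
      then show ?thesis unfolding W_def t by (simp only: exp_eq) blast
    qed
    then have "a = W (int r * j) (of_nat n / of_nat m) * ah"
      using ah by (simp add: \<omega>_def field_simps)
    then show "\<exists>j::int. a = W (int r * j) (of_nat n / of_nat m) * ah" by blast
  qed
qed

lemma slope_lt:
  assumes "finite (E f)" "\<forall>x. f x \<noteq> 0 \<longrightarrow> x < k" "k > 0"
  shows "slope f < k"
proof (cases "E f = {}")
  case True then show ?thesis using assms by (simp add: slope_def)
next
  case False
  then have "Max (E f) \<in> E f" using assms(1) by simp
  then show ?thesis using False assms(2) by (simp add: slope_def E_def)
qed

lemma slope_eq:
  assumes "finite (E f)" "\<forall>x. f x \<noteq> 0 \<longrightarrow> x \<le> k" "f k \<noteq> 0"
  shows "slope f = k"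
proof -
  have kE: "k \<in> E f" using assms(3) by (simp add: E_def)
  then have ne: "E f \<noteq> {}" by auto
  have "Max (E f) = k"
  proof (rule antisym)
    show "Max (E f) \<le> k" using assms(1,2) ne by (simp add: E_def)
    show "k \<le> Max (E f)" using assms(1) kE by simp
  qed
  then show ?thesis using ne by (simp add: slope_def)
qed

lemma support_lt_slope:
  assumes "finite (E f)" "slope f < k" "f x \<noteq> 0"
  shows "x < k"
proof -
  have xE: "x \<in> E f" using assms(3) by (simp add: E_def)
  then have "x \<le> Max (E f)" using assms(1) by simp
  moreover have "slope f = Max (E f)" using xE by (auto simp: slope_def)
  ultimately show ?thesis using assms(2) by simp
qed

theorem mainTheorem6:
  fixes n m :: nat and k :: rat and qc b bh :: expfactor and a ah :: complex
  assumes "n > 0" and "m > 0" and "coprime n m"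
    and "k = of_nat n / of_nat m"
    and "is_expfactor qc" and "\<forall>e\<in>E qc. e > k"
    and "is_expfactor b" and "is_expfactor bh"
    and "slope b < k" and "slope bh < k"
  shows "(stokes_circle (\<lambda>e. qc e + (if e = k then a else 0) + b e)
            \<noteq> stokes_circle (\<lambda>e. qc e + (if e = k then ah else 0) + bh e)
          \<and> fission_exp (\<lambda>e. qc e + (if e = k then a else 0) + b e)
                        (\<lambda>e. qc e + (if e = k then ah else 0) + bh e) = k)
     \<longleftrightarrow> ((m dvd ram qc \<and> a \<noteq> ah)
          \<or> (\<not> m dvd ram qc \<and>
              ((a = 0 \<and> ah \<noteq> 0) \<or> (a \<noteq> 0 \<and> ah = 0)
               \<or> (a \<noteq> 0 \<and> ah \<noteq> 0 \<and>
                  a ^ (lcm (ram qc) m div ram qc) \<noteq> ah ^ (lcm (ram qc) m div ram qc)))))"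
proof -
  note nm = assms(1-4) and qcA = assms(5,6) and bA = assms(7-10)
  define q where "q = (\<lambda>e. qc e + (if e = k then a else 0) + b e)"
  define qh where "qh = (\<lambda>e. qc e + (if e = k then ah else 0) + bh e)"
  define r where "r = ram qc"
  define N where "N = lcm r m div r"
  have kpos: "k > 0" using nm by simp
  have finqc: "finite (E qc)" using assms(5) by (simp add: is_expfactor_def E_def)
  have finb: "finite (E b)" using assms(7) by (simp add: is_expfactor_def E_def)
  have finbh: "finite (E bh)" using assms(8) by (simp add: is_expfactor_def E_def)
  have r1: "r \<ge> 1" using ram_props[OF finqc] by (simp add: r_def)
  have qc0: "qc x = 0" if "x \<le> k" for x
    using assms(6) that by (force simp: E_def)
  have b0: "b x = 0" if "x \<ge> k" for x
    using support_lt_slope[OF finb assms(9), of x] that by force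
  have bh0: "bh x = 0" if "x \<ge> k" for x
    using support_lt_slope[OF finbh assms(10), of x] that by force
  have qgt: "q x = qc x" "qh x = qc x" if "x > k" for x
    using that b0[of x] bh0[of x] by (auto simp: q_def qh_def)
  have qk: "q k = a" "qh k = ah" using qc0[of k] b0[of k] bh0[of k] by (auto simp: q_def qh_def)
  have qlt: "q x = b x" "qh x = bh x" if "x < k" for x
    using that qc0[of x] by (auto simp: q_def qh_def)
  have qcases: "q x \<noteq> 0 \<Longrightarrow> (x > k \<and> qc x \<noteq> 0) \<or> x = k \<or> (x < k \<and> b x \<noteq> 0)" for x
    using qgt qk qlt by (cases "x > k"; cases "x = k") auto
  have qhcases: "qh x \<noteq> 0 \<Longrightarrow> (x > k \<and> qc x \<noteq> 0) \<or> x = k \<or> (x < k \<and> bh x \<noteq> 0)" for x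
    using qgt qk qlt by (cases "x > k"; cases "x = k") auto
  have finq: "finite (E q)"
  proof -
    have "E q \<subseteq> E qc \<union> {k} \<union> E b" using qcases by (auto simp: E_def)
    then show ?thesis using finqc finb by (meson finite_Un finite.emptyI finite.insertI finite_subset)
  qed
  have finqh: "finite (E qh)"
  proof -
    have "E qh \<subseteq> E qc \<union> {k} \<union> E bh" using qhcases by (auto simp: E_def)
    then show ?thesis using finqc finbh by (meson finite_Un finite.emptyI finite.insertI finite_subset)
  qed
  define P where "P = (stokes_circle (tau k q) = stokes_circle (tau k qh))"

  have PB: "P \<longleftrightarrow> (\<exists>j::int. a = W (int r * j) k * ah)"
  proof -
    have "P \<longleftrightarrow> (\<exists>i. \<forall>e. tau k q e = W i e * tau k qh e)"
      unfolding P_def circ_eq sigma_pow_eq fun_eq_iff ..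
    also have "\<dots> \<longleftrightarrow> (\<exists>i. (\<forall>e\<in>E qc. W i e = 1) \<and> a = W i k * ah)"
    proof (intro ex_cong1 iffI)
      fix i assume H: "\<forall>e. tau k q e = W i e * tau k qh e"
      show "(\<forall>e\<in>E qc. W i e = 1) \<and> a = W i k * ah"
      proof
        show "\<forall>e\<in>E qc. W i e = 1"
        proof
          fix e assume e: "e \<in> E qc"
          then have ek: "e > k" using assms(6) by auto
          have "qc e = W i e * qc e" using H[rule_format, of e] ek qgt[OF ek] by (simp add: tau_def)
          then show "W i e = 1" using e by (simp add: E_def)
        qed
        show "a = W i k * ah" using H[rule_format, of k] qk by (simp add: tau_def)
      qed
    next
      fix i assume H: "(\<forall>e\<in>E qc. W i e = 1) \<and> a = W i k * ah"
      show "\<forall>e. tau k q e = W i e * tau k qh e"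
      proof
        fix e
        show "tau k q e = W i e * tau k qh e"
        proof (cases "e > k")
          case True
          then show ?thesis using H qgt[OF True] by (cases "qc e = 0") (auto simp: tau_def E_def)
        next
          case False
          then show ?thesis using H qk by (cases "e = k") (auto simp: tau_def)
        qed
      qed
    qed
    also have "\<dots> \<longleftrightarrow> (\<exists>i. int r dvd i \<and> a = W i k * ah)"
      using ram_dvd_iff[OF finqc] W_eq_1 by (simp add: r_def)
    also have "\<dots> \<longleftrightarrow> (\<exists>j::int. a = W (int r * j) k * ah)"
      by (auto simp: dvd_def)
    finally show ?thesis .
  qed

  have N1: "N \<ge> 1"
  proof -
    have "lcm r m \<noteq> 0" using r1 nm by simp
    moreover have "r dvd lcm r m" by simp
    ultimately have "r \<le> lcm r m" using dvd_imp_le[of r "lcm r m"] lcm_pos_nat[of r m] r1 nm(2) by simp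
    then have "r div r \<le> lcm r m div r" by (rule div_le_mono)
    then show ?thesis unfolding N_def using r1 by simp
  qed
  have mdvd: "m dvd r \<longleftrightarrow> N = 1"
  proof
    assume "m dvd r"
    then have "lcm r m = r" by (simp add: lcm_proj1_iff_nat)
    then show "N = 1" using r1 by (simp add: N_def)
  next
    assume "N = 1"
    then have "lcm r m = r" unfolding N_def
      by (metis dvd_lcm1 dvd_mult_div_cancel mult.right_neutral)
    then show "m dvd r" by (metis dvd_lcm2)
  qed
  have PC: "P \<longleftrightarrow> (a = 0 \<and> ah = 0) \<or> (ah \<noteq> 0 \<and> a ^ N = ah ^ N)"
  proof (cases "ah = 0")
    case True then show ?thesis using PB by simp
  next
    case False
    then show ?thesis using PB root_N[OF nm(2) r1 nm(3) False, of a] by (simp add: nm(4) N_def)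
  qed
  have RHS: "((m dvd r \<and> a \<noteq> ah) \<or> (\<not> m dvd r \<and> ((a = 0 \<and> ah \<noteq> 0) \<or> (a \<noteq> 0 \<and> ah = 0)
               \<or> (a \<noteq> 0 \<and> ah \<noteq> 0 \<and> a ^ N \<noteq> ah ^ N)))) \<longleftrightarrow> \<not> P"
  proof (cases "N = 1")
    case True
    then show ?thesis using PC mdvd by auto
  next
    case False
    have "a \<noteq> 0" if "ah \<noteq> 0" "a ^ N = ah ^ N"
    proof
      assume "a = 0"
      then have "ah ^ N = 0" using that N1 by (simp add: power_0_left)
      then show False using that by simp
    qed
    then show ?thesis using PC mdvd False by auto
  qed

  define CS where "CS = common_set q qh"
  define c where "c = Min CS"
  define Q' where "Q' = (if CS = {} then (\<lambda>_. 0) else tau c q)"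
  define Qh' where "Qh' = (if CS = {} then (\<lambda>_. 0) else tau c qh)"
  define g where "g = (\<lambda>x. q x - Q' x)"
  define gh where "gh = (\<lambda>x. qh x - Qh' x)"
  have fe: "fission_exp q qh = max (slope g) (slope gh)"
    unfolding fission_exp_def Let_def g_def gh_def Q'_def Qh'_def c_def CS_def by simp
  have finCS: "finite CS"
    by (rule finite_subset[OF _ finq]) (auto simp: CS_def common_set_def)
  have qcCS: "x \<in> CS" if "qc x \<noteq> 0" for x
  proof -
    have xk: "x > k" using that qc0[of x] by (cases "x \<le> k") auto
    have "x \<in> E q" using that qgt[OF xk] by (simp add: E_def)
    moreover have "tau x q = tau x qh" using xk qgt by (auto simp: tau_def fun_eq_iff)
    ultimately show ?thesis by (simp add: CS_def common_set_def)
  qed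
  have cle: "c \<le> x" if "x \<in> CS" for x using that finCS by (simp add: c_def)
  have cin: "CS \<noteq> {} \<Longrightarrow> c \<in> CS" using finCS by (simp add: c_def)
  have gsupp: "g x \<noteq> 0 \<Longrightarrow> q x \<noteq> 0 \<and> x \<le> k" for x
  proof -
    assume gx: "g x \<noteq> 0"
    then have qx: "q x \<noteq> 0" by (auto simp: g_def Q'_def tau_def split: if_splits)
    moreover have "x \<le> k"
    proof (rule ccontr)
      assume "\<not> x \<le> k"
      then have xk: "x > k" by simp
      then have "qc x \<noteq> 0" using qx qgt by simp
      then have "x \<in> CS" by (rule qcCS)
      then have "CS \<noteq> {}" "c \<le> x" using cle by auto
      then have "g x = 0" by (simp add: g_def Q'_def tau_def)
      then show False using gx by simp
    qed
    ultimately show ?thesis by simp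
  qed
  have ghsupp: "gh x \<noteq> 0 \<Longrightarrow> qh x \<noteq> 0 \<and> x \<le> k" for x
  proof -
    assume gx: "gh x \<noteq> 0"
    then have qx: "qh x \<noteq> 0" by (auto simp: gh_def Qh'_def tau_def split: if_splits)
    moreover have "x \<le> k"
    proof (rule ccontr)
      assume "\<not> x \<le> k"
      then have xk: "x > k" by simp
      then have "qc x \<noteq> 0" using qx qgt by simp
      then have "x \<in> CS" by (rule qcCS)
      then have "CS \<noteq> {}" "c \<le> x" using cle by auto
      then have "gh x = 0" by (simp add: gh_def Qh'_def tau_def)
      then show False using gx by simp
    qed
    ultimately show ?thesis by simp
  qed
  have fing: "finite (E g)"
  proof (rule finite_subset[OF _ finq])
    show "E g \<subseteq> E q" using gsupp by (auto simp: E_def)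
  qed
  have fingh: "finite (E gh)"
  proof (rule finite_subset[OF _ finqh])
    show "E gh \<subseteq> E qh" using ghsupp by (auto simp: E_def)
  qed
  have gk: "g k = (if CS \<noteq> {} \<and> c \<le> k then 0 else a)"
    using qk by (auto simp: g_def Q'_def tau_def)
  have ghk: "gh k = (if CS \<noteq> {} \<and> c \<le> k then 0 else ah)"
    using qk by (auto simp: gh_def Qh'_def tau_def)

  have LHS: "(stokes_circle q \<noteq> stokes_circle qh \<and> fission_exp q qh = k) \<longleftrightarrow> \<not> P"
  proof
    assume L: "stokes_circle q \<noteq> stokes_circle qh \<and> fission_exp q qh = k"
    show "\<not> P"
    proof
      assume p: P
      then obtain i where i: "tau k q = sigma_pow i (tau k qh)" unfolding P_def circ_eq by blast
      have aW: "a = W i k * ah" using fun_cong[OF i, of k] qk by (simp add: sigma_pow_eq tau_def)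
      have g0: "g k = 0 \<and> gh k = 0"
      proof (cases "a = 0")
        case True
        then have "ah = 0" using aW W_nz by simp
        then show ?thesis using True gk ghk by simp
      next
        case False
        then have "k \<in> E q" using qk by (simp add: E_def)
        then have "k \<in> CS" using p by (simp add: CS_def common_set_def P_def)
        then show ?thesis using gk ghk cle by auto
      qed
      have "slope g < k"
      proof (rule slope_lt[OF fing _ kpos], intro allI impI)
        fix x assume "g x \<noteq> 0"
        then have "x \<le> k" "x \<noteq> k" using gsupp[of x] g0 by auto
        then show "x < k" by simp
      qed
      moreover have "slope gh < k"
      proof (rule slope_lt[OF fingh _ kpos], intro allI impI)
        fix x assume "gh x \<noteq> 0"
        then have "x \<le> k" "x \<noteq> k" using ghsupp[of x] g0 by auto
        then show "x < k" by simp
      qed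
      ultimately have "max (slope g) (slope gh) < k" by simp
      then have "fission_exp q qh < k" unfolding fe .
      then show False using L by simp
    qed
  next
    assume nP: "\<not> P"
    have "stokes_circle q \<noteq> stokes_circle qh"
    proof
      assume "stokes_circle q = stokes_circle qh"
      then have "stokes_circle (tau k q) = stokes_circle (tau k qh)" by (rule circ_full_tau)
      then show False using nP unfolding P_def by blast
    qed
    moreover have "fission_exp q qh = k"
    proof -
      have ck: "\<not> (CS \<noteq> {} \<and> c \<le> k)"
      proof
        assume H: "CS \<noteq> {} \<and> c \<le> k"
        then have cC: "c \<in> CS" and ck: "c \<le> k" using cin by auto
        from cC have "stokes_circle (tau c q) = stokes_circle (tau c qh)"
          by (simp add: CS_def common_set_def)
        then have "stokes_circle (tau k q) = stokes_circle (tau k qh)" using ck by (rule circ_tau_mono)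
        then show False using nP unfolding P_def by blast
      qed
      then have gka: "g k = a" "gh k = ah" using gk ghk by auto
      have "a \<noteq> 0 \<or> ah \<noteq> 0"
      proof (rule ccontr)
        assume "\<not> (a \<noteq> 0 \<or> ah \<noteq> 0)"
        then have a0: "a = 0" "ah = 0" by auto
        have "tau k q = tau k qh"
        proof
          fix x
          show "tau k q x = tau k qh x"
          proof (cases "x > k")
            case True then show ?thesis using qgt[OF True] by (simp add: tau_def)
          next
            case False then show ?thesis using qk a0 by (cases "x = k") (auto simp: tau_def)
          qed
        qed
        then show False using nP by (simp add: P_def)
      qed
      moreover have sa: "slope g = k" if "a \<noteq> 0"
        using fing gsupp gka that by (intro slope_eq) auto
      moreover have sah: "slope gh = k" if "ah \<noteq> 0"
        using fingh ghsupp gka that by (intro slope_eq) auto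
      moreover have sa0: "slope g < k" if "a = 0"
      proof (rule slope_lt[OF fing _ kpos], intro allI impI)
        fix x assume "g x \<noteq> 0"
        then have "x \<le> k" "x \<noteq> k" using gsupp[of x] gka that by auto
        then show "x < k" by simp
      qed
      moreover have sah0: "slope gh < k" if "ah = 0"
      proof (rule slope_lt[OF fingh _ kpos], intro allI impI)
        fix x assume "gh x \<noteq> 0"
        then have "x \<le> k" "x \<noteq> k" using ghsupp[of x] gka that by auto
        then show "x < k" by simp
      qed
      ultimately have "max (slope g) (slope gh) = k"
        by (cases "a = 0"; cases "ah = 0") (simp_all add: max_def)
      then show ?thesis using fe by simp
    qed
    ultimately show "stokes_circle q \<noteq> stokes_circle qh \<and> fission_exp q qh = k" by simp
  qed
  have "(stokes_circle q \<noteq> stokes_circle qh \<and> fission_exp q qh = k) \<longleftrightarrow>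
     ((m dvd r \<and> a \<noteq> ah) \<or> (\<not> m dvd r \<and> ((a = 0 \<and> ah \<noteq> 0) \<or> (a \<noteq> 0 \<and> ah = 0)
               \<or> (a \<noteq> 0 \<and> ah \<noteq> 0 \<and> a ^ N \<noteq> ah ^ N))))"
    using LHS RHS by blast
  then show ?thesis by (simp only: q_def qh_def r_def N_def)
qed

end
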